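(* Let $V$ be an $\mathcal{L}[\frac12]$-module on which $c$ acts as $0$, with a basis $\{x_k\mid k\in\frac12\mathbb{Z}\}$ and constants $a,b\in\mathbb{C}$, $f_{p,k},g_{n,k}\in\mathbb{C}$ such that for all $p\in\frac12+\mathbb{Z}$, $n\in\mathbb{Z}$, $k\in\frac12\mathbb{Z}$: $Y_px_k=f_{p,k}x_{k+p}$, $M_nx_k=g_{n,k}x_{k+n}$, $L_nx_k=(a+k+bn)x_{k+n}$ if $k\in\mathbb{Z}$ and $L_nx_k=(a+k+(b+\frac12)n)x_{k+n}$ if $k\in\frac12+\mathbb{Z}$. Then there exists $d_0\in\mathbb{C}$ such that $f_{p,k}=d_0$ for all $p,k\in\frac12+\mathbb{Z}$.
   Context: $\mathcal{L}[\frac12]$ is the complex Lie algebra with basis $\{L_m,Y_p,M_n,c\mid m,n\in\mathbb{Z},\ p\in\frac12+\mathbb{Z}\}$ and brackets $[L_m,L_{m'}]=(m'-m)L_{m+m'}+\delta_{m,-m'}\frac{m^3-m}{12}c$, $[L_m,Y_p]=(p-\frac m2)Y_{p+m}$, $[L_m,M_n]=nM_{n+m}$, $[Y_p,Y_{p'}]=(p'-p)M_{p+p'}$, $[Y_p,M_n]=[M_n,M_{n'}]=0$, $c$ central. *)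

theory Defs
  imports Main Complex_Main
begin

text \<open>Indices of the Lie algebra and of the basis are encoded as real numbers.
  hZ k: k belongs to (1/2)Z ; hO p: p belongs to 1/2 + Z.\<close>

definition hZ :: "real \<Rightarrow> bool" where "hZ k \<longleftrightarrow> 2 * k \<in> \<int>"
definition hO :: "real \<Rightarrow> bool" where "hO p \<longleftrightarrow> p - 1/2 \<in> \<int>"

definition Lhalf_module ::
  "(complex \<Rightarrow> 'v::ab_group_add \<Rightarrow> 'v) \<Rightarrow> (real \<Rightarrow> 'v \<Rightarrow> 'v) \<Rightarrow> (real \<Rightarrow> 'v \<Rightarrow> 'v)
   \<Rightarrow> (real \<Rightarrow> 'v \<Rightarrow> 'v) \<Rightarrow> ('v \<Rightarrow> 'v) \<Rightarrow> bool" where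
  "Lhalf_module sm L Y M C \<longleftrightarrow>
     module sm \<and>
     (\<forall>m\<in>\<int>. module_hom sm sm (L m)) \<and>
     (\<forall>p. hO p \<longrightarrow> module_hom sm sm (Y p)) \<and>
     (\<forall>n\<in>\<int>. module_hom sm sm (M n)) \<and>
     module_hom sm sm C \<and>
     (\<forall>m\<in>\<int>. \<forall>m'\<in>\<int>. \<forall>v.
        L m (L m' v) - L m' (L m v) =
        sm (complex_of_real (m' - m)) (L (m + m') v)
        + (if m = - m' then sm (complex_of_real ((m^3 - m) / 12)) (C v) else 0)) \<and>
     (\<forall>m\<in>\<int>. \<forall>p. hO p \<longrightarrow> (\<forall>v.
        L m (Y p v) - Y p (L m v) = sm (complex_of_real (p - m / 2)) (Y (p + m) v))) \<and>
     (\<forall>m\<in>\<int>. \<forall>n\<in>\<int>. \<forall>v.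
        L m (M n v) - M n (L m v) = sm (complex_of_real n) (M (n + m) v)) \<and>
     (\<forall>p p'. hO p \<longrightarrow> hO p' \<longrightarrow> (\<forall>v.
        Y p (Y p' v) - Y p' (Y p v) = sm (complex_of_real (p' - p)) (M (p + p') v))) \<and>
     (\<forall>p n. hO p \<longrightarrow> n \<in> \<int> \<longrightarrow> (\<forall>v. Y p (M n v) - M n (Y p v) = 0)) \<and>
     (\<forall>n\<in>\<int>. \<forall>n'\<in>\<int>. \<forall>v. M n (M n' v) - M n' (M n v) = 0) \<and>
     (\<forall>m\<in>\<int>. \<forall>v. L m (C v) - C (L m v) = 0) \<and>
     (\<forall>p. hO p \<longrightarrow> (\<forall>v. Y p (C v) - C (Y p v) = 0)) \<and>
     (\<forall>n\<in>\<int>. \<forall>v. M n (C v) - C (M n v) = 0)"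

definition is_basis_hZ :: "(complex \<Rightarrow> 'v::ab_group_add \<Rightarrow> 'v) \<Rightarrow> (real \<Rightarrow> 'v) \<Rightarrow> bool" where
  "is_basis_hZ sm x \<longleftrightarrow> inj_on x {k. hZ k} \<and>
     \<not> module.dependent sm (x ` {k. hZ k}) \<and> module.span sm (x ` {k. hZ k}) = UNIV"

end

theory Submission
  imports Defs
begin

lemma alg_row0_step:
  fixes F :: "int \<Rightarrow> int \<Rightarrow> complex" and a b :: complex
  assumes E: "\<And>i j m. F i j * (a + of_int (i+j+1) + b*of_int m)
      - (a + of_int j + 1/2 + (b+1/2)*of_int m) * F i (j+m)
      = (of_int i + 1/2 - of_int m/2) * F (i+m) j"
  shows "F 0 (j+1) = F 0 j"
proof -
  have link: "(a + b + of_int j' + 1) * (F 0 j' - F 0 (j'+1)) = 0" for j'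
    using E[of 0 j' 1] by (simp add: algebra_simps)
  show ?thesis
  proof (cases "a + b + of_int j + 1 = 0")
    case False
    then show ?thesis using link[of j] by simp
  next
    case True
    have "a = (a + b + of_int j + 1) - b - of_int j - 1" by simp
    hence aeq: "a = - b - of_int j - 1" using True by simp
    have linkne: "F 0 (j'+1) = F 0 j'" if "a + b + of_int j' + 1 \<noteq> 0" for j'
      using link[of j'] that by simp
    have c1: "a + b + of_int (j-1) + 1 \<noteq> 0" using aeq by simp
    have c2: "a + b + of_int (j-2) + 1 \<noteq> 0" using aeq by simp
    have c3: "a + b + of_int (j-3) + 1 \<noteq> 0" using aeq by simp
    have c4: "a + b + of_int (j-4) + 1 \<noteq> 0" using aeq by simp
    have gm4: "F 0 (j-4) = F 0 (j-3)" using linkne[OF c4] by (simp add: algebra_simps)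
    have gm1: "F 0 (j-1) = F 0 j" using linkne[OF c1] by simp
    have gm2: "F 0 (j-2) = F 0 (j-1)" using linkne[OF c2] by (simp add: algebra_simps)
    have gm3: "F 0 (j-3) = F 0 (j-2)" using linkne[OF c3] by (simp add: algebra_simps)
    show ?thesis
    proof (cases "b = 0 \<or> b = 1/2")
      case False
      have r1: "F (-1) j' = (a - b + of_int j' + 1) * F 0 j' - (a - b + of_int j') * F 0 (j'-1)" for j'
        using E[of 0 j' "-1"] by (simp add: algebra_simps)
      have rr: "(a - b + of_int j') * (F (-1) j' - F (-1) (j'-1)) = 0" for j'
        using E[of "-1" j' "-1"] by (simp add: algebra_simps)
      have v1: "F (-1) (j+1) = (1 - 2*b) * F 0 (j+1) + 2*b * F 0 j"
        using r1[of "j+1"] aeq by (simp add: algebra_simps)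
      have v0: "F (-1) j = F 0 j"
        using r1[of "j"] aeq gm1 by (simp add: algebra_simps)
      have k: "a - b + of_int (j+1) = -2*b" using aeq by simp
      have "(a - b + of_int (j+1)) * (F (-1) (j+1) - F (-1) (j+1-1)) = 0" by (rule rr)
      hence "(-2*b) * (F (-1) (j+1) - F (-1) j) = 0" by (simp only: k add_diff_cancel_right')
      hence "(-2*b) * ((1 - 2*b) * F 0 (j+1) + 2*b * F 0 j - F 0 j) = 0" by (simp only: v1 v0)
      moreover have "(1 - 2*b) * F 0 (j+1) + 2*b * F 0 j - F 0 j = (1 - 2*b) * (F 0 (j+1) - F 0 j)"
        by (simp add: algebra_simps)
      ultimately have "(-2*b) * ((1 - 2*b) * (F 0 (j+1) - F 0 j)) = 0" by simp
      moreover have "1 - 2*b \<noteq> 0" using False by (auto simp: algebra_simps)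
      ultimately show ?thesis using False by simp
    next
      case True
      have r2: "3 * F (-2) j' = 2*(a - 2*b + of_int j' + 1) * F 0 j' - (2*a - 4*b + 2*of_int j' - 1) * F 0 (j'-2)" for j'
      proof -
        have "F 0 j' * (a + of_int (0+j'+1) + b*of_int (-2::int))
           - (a + of_int j' + 1/2 + (b+1/2)*of_int (-2::int)) * F 0 (j'+(-2))
           = (of_int (0::int) + 1/2 - of_int (-2::int)/2) * F (0+(-2)) j'" by (rule E)
        hence "2 * (F 0 j' * (a + of_int (0+j'+1) + b*of_int (-2::int))
           - (a + of_int j' + 1/2 + (b+1/2)*of_int (-2::int)) * F 0 (j'+(-2)))
           = 2 * ((of_int (0::int) + 1/2 - of_int (-2::int)/2) * F (0+(-2)) j')" by (rule arg_cong)
        thus ?thesis by (simp add: algebra_simps)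
      qed
      have rr: "(a - 3*b + of_int j' - 1) * (F (-2) j' - F (-2) (j'-3)) = 0" for j'
        using E[of "-2" j' "-3"] by (simp add: algebra_simps)
      have c: "a - 3*b + of_int (j+1) - 1 = -4*b - 1" using aeq by simp
      have "-4*b - 1 \<noteq> 0" using True
      proof (elim disjE)
        assume h: "b = 0" show ?thesis unfolding h by simp
      next
        assume h: "b = 1/2" show ?thesis unfolding h by simp
      qed
      hence ne: "-4*b - 1 \<noteq> 0" .
      have "(a - 3*b + of_int (j+1) - 1) * (F (-2) (j+1) - F (-2) (j+1-3)) = 0" by (rule rr)
      hence "(-4*b - 1) * (F (-2) (j+1) - F (-2) (j-2)) = 0" by (simp only: c, simp)
      hence e: "F (-2) (j+1) = F (-2) (j-2)" using ne by simp
      have v1: "3 * F (-2) (j+1) = 2*(1 - 3*b) * F 0 (j+1) + (6*b + 1) * F 0 (j-1)"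
        using r2[of "j+1"] aeq by (simp add: algebra_simps)
      have v2: "3 * F (-2) (j-2) = 3 * F 0 j"
        using r2[of "j-2"] aeq gm1 gm2 gm3 gm4 by (simp add: algebra_simps)
      have "2 * ((1 - 3*b) * (F 0 (j+1) - F 0 j)) = 0"
        using v1 v2 e gm1 by (simp add: algebra_simps)
      hence "(1 - 3*b) * (F 0 (j+1) - F 0 j) = 0" by simp
      moreover have "1 - 3*b \<noteq> 0" using True
      proof (elim disjE)
        assume h: "b = 0" show ?thesis unfolding h by simp
      next
        assume h: "b = 1/2" show ?thesis unfolding h by simp
      qed
      ultimately show ?thesis by simp
    qed
  qed
qed

lemma alg_all:
  fixes F :: "int \<Rightarrow> int \<Rightarrow> complex" and a b :: complex
  assumes E: "\<And>i j m. F i j * (a + of_int (i+j+1) + b*of_int m)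
      - (a + of_int j + 1/2 + (b+1/2)*of_int m) * F i (j+m)
      = (of_int i + 1/2 - of_int m/2) * F (i+m) j"
  shows "F i j = F 0 0"
proof -
  have st: "F 0 (j+1) = F 0 j" for j using alg_row0_step[OF E] .
  have row0: "F 0 j = F 0 0" for j
  proof (induction j rule: int_induct[where k=0])
    case base then show ?case by simp
  next
    case (step1 i) then show ?case using st[of i] by simp
  next
    case (step2 i) then show ?case using st[of "i-1"] by simp
  qed
  have rowi: "F i j = F 0 0" if "i \<noteq> 1" for i j
  proof -
    have "F 0 j * (a + of_int (0+j+1) + b*of_int i)
      - (a + of_int j + 1/2 + (b+1/2)*of_int i) * F 0 (j+i)
      = (of_int 0 + 1/2 - of_int i/2) * F (0+i) j" by (rule E)
    hence "F 0 0 * (a + of_int (0+j+1) + b*of_int i)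
      - (a + of_int j + 1/2 + (b+1/2)*of_int i) * F 0 0
      = (of_int 0 + 1/2 - of_int i/2) * F i j" by (simp only: row0[of j] row0[of "j+i"], simp)
    hence "(1 - of_int i) * (F i j - F 0 0) = 0" by (simp add: algebra_simps)
    moreover have "(1 - of_int i :: complex) \<noteq> 0"
    proof
      assume "(1 - of_int i :: complex) = 0"
      hence "(of_int i :: complex) = of_int 1" by simp
      hence "i = 1" by (simp only: of_int_eq_iff)
      with that show False by simp
    qed
    ultimately show ?thesis by simp
  qed
  show ?thesis
  proof (cases "i = 1")
    case False then show ?thesis by (rule rowi)
  next
    case True
    have "F (-1) j * (a + of_int (-1+j+1) + b*of_int (2::int))
      - (a + of_int j + 1/2 + (b+1/2)*of_int (2::int)) * F (-1) (j+2)
      = (of_int (-1) + 1/2 - of_int (2::int)/2) * F (-1+2) j" by (rule E)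
    hence "F 0 0 * (a + of_int (-1+j+1) + b*of_int (2::int))
      - (a + of_int j + 1/2 + (b+1/2)*of_int (2::int)) * F 0 0
      = (of_int (-1) + 1/2 - of_int (2::int)/2) * F 1 j" using rowi[of "-1" j] rowi[of "-1" "j+2"] by simp
    hence "3 * (F 1 j - F 0 0) = 0" by (simp add: algebra_simps)
    then show ?thesis using True by simp
  qed
qed


lemma indep_coeff_zero:
  assumes "module sm" "\<not> module.dependent sm S" "w \<in> S" "sm c w = 0"
  shows "c = 0"
proof (rule ccontr)
  assume "c \<noteq> 0"
  have "module.dependent sm S"
    unfolding module.dependent_explicit[OF assms(1)]
    by (rule exI[of _ "{w}"], rule exI[of _ "\<lambda>_. c"]) (use assms \<open>c \<noteq> 0\<close> in auto)
  with assms(2) show False by simp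
qed

theorem lemma3p4:
  fixes sm :: "complex \<Rightarrow> 'v::ab_group_add \<Rightarrow> 'v"
    and L Y M :: "real \<Rightarrow> 'v \<Rightarrow> 'v" and C :: "'v \<Rightarrow> 'v"
    and x :: "real \<Rightarrow> 'v"
    and a b :: complex and f g :: "real \<Rightarrow> real \<Rightarrow> complex"
  assumes "Lhalf_module sm L Y M C"
    and "\<forall>v. C v = 0"
    and "is_basis_hZ sm x"
    and "\<forall>p k. hO p \<longrightarrow> hZ k \<longrightarrow> Y p (x k) = sm (f p k) (x (k + p))"
    and "\<forall>n k. n \<in> \<int> \<longrightarrow> hZ k \<longrightarrow> M n (x k) = sm (g n k) (x (k + n))"
    and "\<forall>n k. n \<in> \<int> \<longrightarrow> k \<in> \<int> \<longrightarrow>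
           L n (x k) = sm (a + complex_of_real k + b * complex_of_real n) (x (k + n))"
    and "\<forall>n k. n \<in> \<int> \<longrightarrow> hO k \<longrightarrow>
           L n (x k) = sm (a + complex_of_real k + (b + 1/2) * complex_of_real n) (x (k + n))"
  shows "\<exists>d0. \<forall>p k. hO p \<longrightarrow> hO k \<longrightarrow> f p k = d0"
proof -
  note H = assms
  have D: "Lhalf_module sm L Y M C" by (rule H(1))
  note D' = D[unfolded Lhalf_module_def]
  have mod: "module sm" using conjunct1[OF D'] .
  have Lh: "\<And>m. m \<in> \<int> \<Longrightarrow> module_hom sm sm (L m)"
    using conjunct1[OF conjunct2[OF D']] by blast
  have Yh: "\<And>p. hO p \<Longrightarrow> module_hom sm sm (Y p)"
    using conjunct1[OF conjunct2[OF conjunct2[OF D']]] by blast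
  have comm: "\<And>m p v. m \<in> \<int> \<Longrightarrow> hO p \<Longrightarrow>
        L m (Y p v) - Y p (L m v) = sm (complex_of_real (p - m / 2)) (Y (p + m) v)"
    using conjunct1[OF conjunct2[OF conjunct2[OF conjunct2[OF conjunct2[OF conjunct2[OF conjunct2[OF D']]]]]]] by blast
  have ind: "\<not> module.dependent sm (x ` {k. hZ k})" using H(3) unfolding is_basis_hZ_def by blast
  define F where "F i j = f (of_int i + 1/2) (of_int j + 1/2)" for i j :: int
  have E: "F i j * (a + of_int (i+j+1) + b*of_int m)
      - (a + of_int j + 1/2 + (b+1/2)*of_int m) * F i (j+m)
      = (of_int i + 1/2 - of_int m/2) * F (i+m) j" for i j m :: int
  proof -
    define p :: real where "p = of_int i + 1/2"
    define k :: real where "k = of_int j + 1/2"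
    define r :: real where "r = of_int m"
    have hp: "hO p" unfolding hO_def p_def by simp
    have hk: "hO k" unfolding hO_def k_def by simp
    have hkZ: "hZ k" unfolding hZ_def k_def by (simp add: algebra_simps)
    have "k + r - 1/2 = of_int (j+m)" unfolding k_def r_def by simp
    hence hkm: "hO (k + r)" unfolding hO_def by (metis Ints_of_int)
    have "2 * (k + r) = of_int (2*(j+m)+1)" unfolding k_def r_def by (simp add: algebra_simps)
    hence hkmZ: "hZ (k + r)" unfolding hZ_def by (metis Ints_of_int)
    have rZ: "r \<in> \<int>" unfolding r_def by simp
    have "k + p = of_int (i+j+1)" unfolding k_def p_def by (simp add: algebra_simps)
    hence kpZ: "k + p \<in> \<int>" by (metis Ints_of_int)
    define w where "w = x (k + p + r)"
    have wS: "w \<in> x ` {k. hZ k}"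
    proof -
      have "2 * (k + p + r) = of_int (2*(i+j+1+m))" unfolding k_def p_def r_def by (simp add: algebra_simps)
      hence "hZ (k + p + r)" unfolding hZ_def by (metis Ints_of_int)
      thus ?thesis unfolding w_def by blast
    qed
    interpret LM: module_hom sm sm "L r" by (rule Lh[OF rZ])
    interpret YP: module_hom sm sm "Y p" by (rule Yh[OF hp])
    have t1: "L r (Y p (x k)) = sm (f p k * (a + complex_of_real (k+p) + b * complex_of_real r)) w"
      using H(4) hp hkZ H(6) kpZ rZ unfolding w_def by (simp add: LM.scale module.scale_scale[OF mod])
    have t2: "Y p (L r (x k)) = sm ((a + complex_of_real k + (b + 1/2) * complex_of_real r) * f p (k + r)) w"
    proof -
      have "Y p (x (k + r)) = sm (f p (k+r)) (x (k + r + p))" using H(4) hp hkmZ by simp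
      moreover have "k + r + p = k + p + r" by simp
      ultimately show ?thesis using H(7) rZ hk unfolding w_def by (simp add: YP.scale module.scale_scale[OF mod])
    qed
    have t3: "sm (complex_of_real (p - r / 2)) (Y (p + r) (x k)) = sm (complex_of_real (p - r/2) * f (p+r) k) w"
    proof -
      have "p + r - 1/2 = of_int (i+m)" unfolding p_def r_def by simp
      hence "hO (p + r)" unfolding hO_def by (metis Ints_of_int)
      hence "Y (p + r) (x k) = sm (f (p+r) k) (x (k + (p + r)))" using H(4) hkZ by simp
      moreover have "k + (p + r) = k + p + r" by simp
      ultimately show ?thesis unfolding w_def by (simp add: module.scale_scale[OF mod])
    qed
    have "sm (f p k * (a + complex_of_real (k+p) + b * complex_of_real r)) w
        - sm ((a + complex_of_real k + (b + 1/2) * complex_of_real r) * f p (k + r)) w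
        = sm (complex_of_real (p - r/2) * f (p+r) k) w"
      using comm[OF rZ hp, of "x k"] t1 t2 t3 by simp
    hence "sm (f p k * (a + complex_of_real (k+p) + b * complex_of_real r)
        - (a + complex_of_real k + (b + 1/2) * complex_of_real r) * f p (k + r)
        - complex_of_real (p - r/2) * f (p+r) k) w = 0"
      by (simp add: module.scale_left_diff_distrib[OF mod])
    hence z: "f p k * (a + complex_of_real (k+p) + b * complex_of_real r)
        - (a + complex_of_real k + (b + 1/2) * complex_of_real r) * f p (k + r)
        - complex_of_real (p - r/2) * f (p+r) k = 0"
      using indep_coeff_zero[OF mod ind wS] by blast
    have e1: "F i j = f p k" unfolding F_def p_def k_def by simp
    have e2: "F i (j+m) = f p (k + r)" unfolding F_def p_def k_def r_def by (simp add: algebra_simps)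
    have e3: "F (i+m) j = f (p + r) k" unfolding F_def p_def k_def r_def by (simp add: algebra_simps)
    have e4: "complex_of_real (k+p) = of_int (i+j+1)" unfolding k_def p_def by simp
    have e5: "complex_of_real k = of_int j + 1/2" unfolding k_def by simp
    have e6: "complex_of_real r = of_int m" unfolding r_def by simp
    have e7: "complex_of_real (p - r/2) = of_int i + 1/2 - of_int m/2" unfolding p_def r_def by simp
    show ?thesis using z unfolding e1 e2 e3 e4 e5 e6 e7 by (simp add: add.assoc)
  qed
  have all: "F i j = F 0 0" for i j using alg_all[OF E] .
  show ?thesis
  proof (rule exI[of _ "F 0 0"], intro allI impI)
    fix p k assume hp: "hO p" and hk: "hO k"
    obtain i where i: "p - 1/2 = of_int i" using hp unfolding hO_def by (auto elim: Ints_cases)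
    obtain j where j: "k - 1/2 = of_int j" using hk unfolding hO_def by (auto elim: Ints_cases)
    have "f p k = F i j" unfolding F_def using i j by (simp add: algebra_simps)
    thus "f p k = F 0 0" using all[of i j] by simp
  qed
qed

end
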